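(* Let $\mathbf{S}$ be a real symmetric positive semidefinite $p\times p$ matrix and $\lambda_a\in(0,\infty)$. The function $\mathbf{\Omega}\mapsto \ln|\mathbf{\Omega}| - \mathrm{tr}(\mathbf{S}\mathbf{\Omega}) - \frac{\lambda_a}{2}\mathrm{tr}(\mathbf{\Omega}^{\mathrm{T}}\mathbf{\Omega})$ over real symmetric positive definite $p\times p$ matrices is maximized by $$\hat{\mathbf{\Omega}}^{\mathrm{II}a}(\lambda_a) = \Big\{\Big[\lambda_a\mathbf{I}_p + \tfrac14\mathbf{S}^2\Big]^{1/2} + \tfrac12\mathbf{S}\Big\}^{-1},$$ the solution of $\mathbf{\Omega}^{-1}-\mathbf{S}-\lambda_a\mathbf{\Omega}=\mathbf{0}$. Moreover: (i) $\hat{\mathbf{\Omega}}^{\mathrm{II}a}(\lambda_a)$ is positive definite for all $\lambda_a\in(0,\infty)$; (ii) if $\mathbf{S}$ is positive definite, $\lim_{\lambda_a\to0^+}\hat{\mathbf{\Omega}}^{\mathrm{II}a}(\lambda_a)=\mathbf{S}^{-1}$; (iii) $\lim_{\lambda_a\to\infty}\hat{\mathbf{\Omega}}^{\mathrm{II}a}(\lambda_a)=\mathbf{0}$.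
   Context: $|\cdot|$ is the determinant, $\mathbf{I}_p$ the identity; for a real symmetric positive definite $\mathbf{H}$, $\mathbf{H}^{1/2}$ is its unique symmetric positive definite square root. *)

theory Defs
  imports "HOL-Analysis.Analysis"
begin

definition sym_mat :: "real^'n^'n \<Rightarrow> bool" where
  "sym_mat A \<longleftrightarrow> transpose A = A"

definition psd_mat :: "real^'n^'n \<Rightarrow> bool" where
  "psd_mat A \<longleftrightarrow> sym_mat A \<and> (\<forall>x. 0 \<le> x \<bullet> (A *v x))"

definition pd_mat :: "real^'n^'n \<Rightarrow> bool" where
  "pd_mat A \<longleftrightarrow> sym_mat A \<and> (\<forall>x. x \<noteq> 0 \<longrightarrow> 0 < x \<bullet> (A *v x))"

definition mat_sqrt :: "real^'n^'n \<Rightarrow> real^'n^'n" where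
  "mat_sqrt H = (THE R. pd_mat R \<and> R ** R = H)"

definition objective :: "real^'n^'n \<Rightarrow> real \<Rightarrow> real^'n^'n \<Rightarrow> real" where
  "objective S la \<Omega> = ln (det \<Omega>) - trace (S ** \<Omega>) - la / 2 * trace (transpose \<Omega> ** \<Omega>)"

definition Omega_hat :: "real^'n^'n \<Rightarrow> real \<Rightarrow> real^'n^'n" where
  "Omega_hat S la = matrix_inv (mat_sqrt (la *\<^sub>R mat 1 + (1/4) *\<^sub>R (S ** S)) + (1/2) *\<^sub>R S)"

end

theory Submission
  imports Defs "HOL-Real_Asymp.Real_Asymp"
begin

lemma mradd: "((A::real^'n^'m) + B) ** C = A ** C + B ** C"
  by (simp add: matrix_matrix_mult_def vec_eq_iff sum.distrib distrib_right)
lemma mrsub: "((A::real^'n^'m) - B) ** C = A ** C - B ** C"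
  by (simp add: matrix_matrix_mult_def vec_eq_iff sum_subtractf left_diff_distrib)
lemma mlsub: "(A::real^'n^'m) ** (B - C) = A ** B - A ** C"
  by (simp add: matrix_matrix_mult_def vec_eq_iff sum_subtractf right_diff_distrib)
lemma mladd: "(A::real^'n^'m) ** (B + C) = A ** B + A ** C"
  by (rule matrix_add_ldistrib)
lemma mscl: "(A::real^'n^'m) ** (c *\<^sub>R B) = c *\<^sub>R (A ** B)"
  by (simp add: matrix_scalar_ac scalar_matrix_assoc)
lemma mscr: "(c *\<^sub>R (A::real^'n^'m)) ** B = c *\<^sub>R (A ** B)"
  by (simp add: scalar_matrix_assoc)
lemma trace_scale: "trace (c *\<^sub>R (A::real^'n^'n)) = c * trace A"
  by (simp add: trace_def sum_distrib_left)

lemma minv_eq: assumes "(A::real^'n^'n) ** B = mat 1" shows "matrix_inv A = B"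
proof -
  have BA: "B ** A = mat 1" using assms matrix_left_right_inverse by blast
  have AI: "A ** matrix_inv A = mat 1 \<and> matrix_inv A ** A = mat 1"
    unfolding matrix_inv_def by (rule someI[of _ B]) (use assms BA in blast)
  have "matrix_inv A = (B ** A) ** matrix_inv A" using BA by simp
  also have "\<dots> = B ** (A ** matrix_inv A)" by (simp add: matrix_mul_assoc)
  also have "\<dots> = B" using AI by simp
  finally show ?thesis .
qed

definition dg :: "('n \<Rightarrow> real) \<Rightarrow> real^'n^'n" where
  "dg g = (\<chi> i j. if i = j then g i else 0)"
definition MM :: "real^'n^'n \<Rightarrow> ('n \<Rightarrow> real) \<Rightarrow> real^'n^'n" where
  "MM U g = U ** dg g ** transpose U"

lemma dg_mult: fixes g h :: "'n::finite \<Rightarrow> real" shows "dg g ** dg h = dg (\<lambda>i. g i * h i)"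
proof -
  have "(\<Sum>k\<in>UNIV. (if i = k then g i else 0) * (if k = j then h k else 0)) = (if i = j then g i * h i else 0)" for i j :: 'n
  proof -
    have "(\<Sum>k\<in>UNIV. (if i = k then g i else 0) * (if k = j then h k else 0)) = (\<Sum>k\<in>UNIV. if k = i then g i * (if i = j then h i else 0) else 0)"
      by (rule sum.cong) auto
    also have "\<dots> = (if i = j then g i * h i else 0)" by simp
    finally show ?thesis .
  qed
  then show ?thesis by (simp add: dg_def matrix_matrix_mult_def vec_eq_iff)
qed
lemma dg_add: "dg g + dg h = dg (\<lambda>i. g i + h i)"
  by (simp add: dg_def vec_eq_iff)
lemma dg_sub: "dg g - dg h = dg (\<lambda>i. g i - h i)"
  by (simp add: dg_def vec_eq_iff)
lemma dg_scale: "c *\<^sub>R dg g = dg (\<lambda>i. c * g i)"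
  by (simp add: dg_def vec_eq_iff)
lemma dg_const: "dg (\<lambda>i. c) = c *\<^sub>R mat 1"
  by (simp add: dg_def vec_eq_iff mat_def)
lemma dg_transpose: "transpose (dg g) = dg g"
  by (simp add: dg_def vec_eq_iff transpose_def)

context fixes U :: "real^'n^'n" assumes U: "orthogonal_matrix U"
begin
lemma UtU: "transpose U ** U = mat 1" and UUt: "U ** transpose U = mat 1"
  using U by (auto simp: orthogonal_matrix_def)

lemma MM_mult: "MM U g ** MM U h = MM U (\<lambda>i. g i * h i)"
proof -
  have "MM U g ** MM U h = U ** dg g ** (transpose U ** U) ** dg h ** transpose U"
    by (simp add: MM_def matrix_mul_assoc)
  also have "\<dots> = MM U (\<lambda>i. g i * h i)"
    by (simp add: UtU MM_def dg_mult matrix_mul_assoc[symmetric])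
  finally show ?thesis .
qed
lemma MM_add: "MM U g + MM U h = MM U (\<lambda>i. g i + h i)"
  by (simp add: MM_def mladd mradd dg_add[symmetric])
lemma MM_sub: "MM U g - MM U h = MM U (\<lambda>i. g i - h i)"
  by (simp add: MM_def mlsub mrsub dg_sub[symmetric])
lemma MM_scale: "c *\<^sub>R MM U g = MM U (\<lambda>i. c * g i)"
  by (simp add: MM_def mscl mscr dg_scale[symmetric])
lemma MM_const: "MM U (\<lambda>i. c) = c *\<^sub>R mat 1"
  by (simp add: MM_def dg_const mscl mscr UUt)
lemma MM_zero: "MM U (\<lambda>i. 0) = 0"
  by (simp add: MM_const)
lemma MM_sym: "transpose (MM U g) = MM U g"
  by (simp add: MM_def matrix_transpose_mul dg_transpose matrix_mul_assoc)
lemma MM_inv: assumes "\<And>i. g i \<noteq> 0" shows "matrix_inv (MM U g) = MM U (\<lambda>i. 1 / g i)"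
  by (rule minv_eq) (simp add: MM_mult assms MM_const)
lemma MM_det: "det (MM U g) = (\<Prod>i\<in>UNIV. g i)"
proof -
  have "det U * det U = 1"
    using det_mul[of U "transpose U"] UUt by (simp add: det_transpose)
  moreover have "det (dg g) = (\<Prod>i\<in>UNIV. g i)"
    by (subst det_diagonal) (auto simp: dg_def)
  ultimately show ?thesis by (simp add: MM_def det_mul det_transpose)
qed
lemma MM_trace: "trace (MM U g) = sum g UNIV"
proof -
  have "trace (MM U g) = trace ((dg g ** transpose U) ** U)"
    unfolding MM_def by (metis matrix_mul_assoc trace_mul_sym)
  also have "\<dots> = trace (dg g)" by (simp add: matrix_mul_assoc[symmetric] UtU)
  also have "\<dots> = sum g UNIV" by (simp add: trace_def dg_def)
  finally show ?thesis .
qed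
lemma MM_entry: "MM U g = (\<chi> i j. \<Sum>k\<in>UNIV. U$i$k * g k * U$j$k)"
  by (simp add: MM_def dg_def matrix_matrix_mult_def vec_eq_iff transpose_def
      if_distrib if_distribR sum.delta cong: if_cong)
lemma MM_tendsto:
  assumes "\<And>i. ((\<lambda>x. g x i) \<longlongrightarrow> l i) F"
  shows "((\<lambda>x. MM U (g x)) \<longlongrightarrow> MM U l) F"
  unfolding MM_entry
  by (intro tendsto_vec_lambda tendsto_sum tendsto_mult tendsto_const assms)
lemma MM_quad: "x \<bullet> (MM U g *v x) = (\<Sum>k\<in>UNIV. g k * ((transpose U *v x)$k)^2)"
proof -
  have "MM U g *v x = U *v (dg g *v (transpose U *v x))"
    by (simp add: MM_def matrix_vector_mul_assoc matrix_mul_assoc del: transpose_matrix_vector)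
  then have "x \<bullet> (MM U g *v x) = (transpose U *v x) \<bullet> (dg g *v (transpose U *v x))"
    by (metis dot_lmul_matrix transpose_matrix_vector)
  also have "\<dots> = (\<Sum>k\<in>UNIV. g k * ((transpose U *v x)$k)^2)"
    by (simp add: inner_vec_def dg_def matrix_vector_mult_def if_distrib if_distribR sum.delta
        power2_eq_square mult_ac cong: if_cong)
  finally show ?thesis .
qed
lemma MM_pd: assumes "\<And>i. g i > 0" shows "pd_mat (MM U g)"
  unfolding pd_mat_def sym_mat_def
proof (intro conjI allI impI MM_sym)
  fix x :: "real^'n" assume "x \<noteq> 0"
  define y where "y = transpose U *v x"
  have "U *v y = x" by (simp add: y_def matrix_vector_mul_assoc UUt del: transpose_matrix_vector)
  then have "y \<noteq> 0" using \<open>x \<noteq> 0\<close> by auto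
  then obtain k where k: "y $ k \<noteq> 0" by (auto simp: vec_eq_iff)
  have "0 < g k * (y$k)^2" using assms k by simp
  also have "\<dots> \<le> (\<Sum>k\<in>UNIV. g k * (y$k)^2)"
    by (rule member_le_sum) (simp_all add: assms less_imp_le)
  finally show "0 < x \<bullet> (MM U g *v x)" by (simp add: MM_quad y_def)
qed
lemma MM_eigen: "(U *v axis i 1) \<bullet> (MM U g *v (U *v axis i 1)) = g i"
  and MM_eigen_nz: "U *v axis i 1 \<noteq> 0"
proof -
  have t: "transpose U *v (U *v axis i 1) = axis i 1"
    by (simp add: matrix_vector_mul_assoc UtU del: transpose_matrix_vector)
  show "(U *v axis i 1) \<bullet> (MM U g *v (U *v axis i 1)) = g i"
    by (simp add: MM_quad t del: transpose_matrix_vector) (simp add: axis_def if_distrib if_distribR sum.delta cong: if_cong)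
  show "U *v axis i 1 \<noteq> 0"
  proof
    assume "U *v axis i 1 = 0"
    then have "axis i 1 = (0::real^'n)" using t by (simp del: transpose_matrix_vector)
    then show False by (simp add: axis_eq_0_iff)
  qed
qed
end

lemma sym_inner: assumes "sym_mat (A::real^'n^'n)" shows "x \<bullet> (A *v y) = (A *v x) \<bullet> y"
proof -
  have "x \<bullet> (A *v y) = (x v* A) \<bullet> y" by (simp add: dot_lmul_matrix)
  also have "x v* A = transpose A *v x" by simp
  also have "\<dots> = A *v x" using assms by (simp add: sym_mat_def del: transpose_matrix_vector)
  finally show ?thesis .
qed

lemma quad_scale: "(c *\<^sub>R w) \<bullet> ((A::real^'n^'n) *v (c *\<^sub>R w)) = c^2 * (w \<bullet> (A *v w))"
  by (simp add: matrix_vector_mult_scaleR power2_eq_square)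

lemma small_arith:
  fixes a c :: real
  assumes "\<And>t. 2 * t * a \<le> t^2 * c"
  shows "a = 0"
proof (rule ccontr)
  assume "a \<noteq> 0"
  define e where "e = \<bar>c\<bar> + 1"
  have e: "e > 0" "c \<le> e - 1" by (auto simp: e_def)
  have "2 * (a / e) * a \<le> (a/e)^2 * c" by (rule assms)
  then have "2 * a * a * e \<le> a * a * c"
    using e by (simp add: field_simps power2_eq_square)
  moreover have "a * a * c \<le> a * a * (e - 1)" using e by (intro mult_left_mono) auto
  ultimately have "a * a * (e + 1) \<le> 0" by (simp add: algebra_simps)
  moreover have "a * a > 0" using \<open>a \<noteq> 0\<close> by (auto simp add: zero_less_mult_iff linorder_neq_iff)
  then have "a * a * (e + 1) > 0" using e by simp
  ultimately show False by simp
qed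

lemma eig_exists:
  fixes A :: "real^'n^'n"
  assumes A: "sym_mat A" and V: "subspace V" and inv: "\<And>x. x \<in> V \<Longrightarrow> A *v x \<in> V"
    and nz: "x0 \<in> V" "x0 \<noteq> 0"
  shows "\<exists>u\<in>V. norm u = 1 \<and> A *v u = (u \<bullet> (A *v u)) *\<^sub>R u"
proof -
  define K where "K = sphere (0::real^'n) 1 \<inter> V"
  have cK: "compact K" unfolding K_def by (intro compact_Int_closed closed_subspace V compact_sphere)
  have "(1 / norm x0) *\<^sub>R x0 \<in> K" using nz V by (auto simp: K_def subspace_scale)
  then have neK: "K \<noteq> {}" by auto
  have cont: "continuous_on K (\<lambda>x. x \<bullet> (A *v x))"
    by (intro continuous_intros matrix_vector_mult_linear_continuous_on)
  obtain u where uK: "u \<in> K" and umax: "\<And>y. y \<in> K \<Longrightarrow> y \<bullet> (A *v y) \<le> u \<bullet> (A *v u)"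
    using continuous_attains_sup[OF cK neK cont] by blast
  define m where "m = u \<bullet> (A *v u)"
  have uV: "u \<in> V" and un: "norm u = 1" using uK by (auto simp: K_def)
  then have uu: "u \<bullet> u = 1" by (simp add: norm_eq_1)
  have key: "v \<bullet> (A *v u) = 0" if vV: "v \<in> V" and uv: "u \<bullet> v = 0" for v
  proof (rule small_arith[where c = "m * (v \<bullet> v) - v \<bullet> (A *v v)"])
    fix t :: real
    define w where "w = u + t *\<^sub>R v"
    have wV: "w \<in> V" using uV vV V by (simp add: w_def subspace_add subspace_scale)
    have ww: "w \<bullet> w = 1 + t^2 * (v \<bullet> v)"
      using uu uv by (simp add: w_def inner_add_left inner_add_right inner_commute power2_eq_square)
    then have wpos: "w \<bullet> w > 0" by (smt (verit) inner_ge_zero zero_le_power2 mult_nonneg_nonneg)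
    then have "w \<noteq> 0" by auto
    then have nw: "norm w > 0" by simp
    have "(1 / norm w) *\<^sub>R w \<in> K" using wV V nw by (auto simp: K_def subspace_scale)
    then have "((1 / norm w) *\<^sub>R w) \<bullet> (A *v ((1 / norm w) *\<^sub>R w)) \<le> m"
      unfolding m_def by (rule umax)
    then have "(1 / norm w)^2 * (w \<bullet> (A *v w)) \<le> m" by (simp only: quad_scale)
    moreover have "(norm w)^2 = w \<bullet> w" by (simp add: power2_norm_eq_inner)
    ultimately have "w \<bullet> (A *v w) \<le> m * (w \<bullet> w)"
      using nw by (simp add: field_simps power2_eq_square)
    moreover have "w \<bullet> (A *v w) = m + 2 * t * (v \<bullet> (A *v u)) + t^2 * (v \<bullet> (A *v v))"
    proof -
      have "u \<bullet> (A *v v) = v \<bullet> (A *v u)"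
        using sym_inner[OF A, of u v] by (simp add: inner_commute)
      then show ?thesis
        by (simp add: w_def m_def inner_add_left inner_add_right matrix_vector_right_distrib
            matrix_vector_mult_scaleR power2_eq_square algebra_simps)
    qed
    ultimately show "2 * t * (v \<bullet> (A *v u)) \<le> t^2 * (m * (v \<bullet> v) - v \<bullet> (A *v v))"
      using ww by (simp add: algebra_simps)
  qed
  define v0 where "v0 = A *v u - m *\<^sub>R u"
  have v0V: "v0 \<in> V" using inv[OF uV] uV V by (simp add: v0_def subspace_diff subspace_scale)
  have "u \<bullet> v0 = 0" using uu by (simp add: v0_def m_def inner_diff_right)
  then have "v0 \<bullet> (A *v u) = 0" using key v0V by blast
  moreover have "v0 \<bullet> u = 0" using \<open>u \<bullet> v0 = 0\<close> by (simp add: inner_commute)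
  ultimately have "v0 \<bullet> v0 = 0" by (simp add: v0_def inner_diff_right)
  then have "v0 = 0" by simp
  then show ?thesis using uV un by (auto simp: v0_def m_def)
qed

definition oeig :: "real^'n^'n \<Rightarrow> (real^'n) set \<Rightarrow> bool" where
  "oeig A B \<longleftrightarrow> finite B \<and> pairwise orthogonal B \<and>
     (\<forall>b\<in>B. norm b = 1 \<and> A *v b = (b \<bullet> (A *v b)) *\<^sub>R b)"

lemma oeig_extend:
  fixes A :: "real^'n^'n"
  assumes A: "sym_mat A" and B: "oeig A B" and cB: "card B < CARD('n)"
  shows "\<exists>B'. oeig A B' \<and> card B' = Suc (card B)"
proof -
  have fB: "finite B" and poB: "pairwise orthogonal B"
    and nB: "\<And>b. b \<in> B \<Longrightarrow> norm b = 1"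
    and eB: "\<And>b. b \<in> B \<Longrightarrow> A *v b = (b \<bullet> (A *v b)) *\<^sub>R b"
    using B by (auto simp: oeig_def)
  define V where "V = {y. \<forall>x\<in>B. orthogonal x y}"
  have V: "subspace V" unfolding V_def by (rule subspace_orthogonal_to_vectors)
  have inv: "A *v x \<in> V" if "x \<in> V" for x
  proof -
    have "orthogonal b (A *v x)" if "b \<in> B" for b
    proof -
      have "b \<bullet> (A *v x) = (A *v b) \<bullet> x" by (rule sym_inner[OF A])
      also have "\<dots> = (b \<bullet> (A *v b)) * (b \<bullet> x)" by (metis eB[OF \<open>b \<in> B\<close>] inner_scaleR_left)
      also have "b \<bullet> x = 0" using \<open>x \<in> V\<close> \<open>b \<in> B\<close> by (auto simp: V_def orthogonal_def)
      finally show ?thesis by (simp add: orthogonal_def)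
    qed
    then show ?thesis by (simp add: V_def)
  qed
  have ind: "independent B"
    using poB nB by (intro pairwise_orthogonal_independent) force+
  have "span B \<noteq> UNIV"
  proof
    assume "span B = UNIV"
    then have "dim (span B) = CARD('n)" by (simp add: DIM_cart)
    then show False using cB dim_span_eq_card_independent[OF ind] by simp
  qed
  then obtain x where x: "x \<notin> span B" by auto
  define y where "y = x - (\<Sum>b\<in>B. (b \<bullet> x) *\<^sub>R b)"
  have "(\<Sum>b\<in>B. (b \<bullet> x) *\<^sub>R b) \<in> span B"
    by (intro span_sum span_scale span_base)
  then have "y \<noteq> 0" using x unfolding y_def by (metis eq_iff_diff_eq_0)
  have "y \<in> V"
  proof -
    have "c \<bullet> y = 0" if "c \<in> B" for c
    proof -
      have "c \<bullet> (\<Sum>b\<in>B. (b \<bullet> x) *\<^sub>R b) = (\<Sum>b\<in>B. (b \<bullet> x) * (c \<bullet> b))"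
        by (simp add: inner_sum_right)
      also have "\<dots> = (\<Sum>b\<in>B. if b = c then c \<bullet> x else 0)"
      proof (rule sum.cong)
        fix b assume "b \<in> B"
        show "(b \<bullet> x) * (c \<bullet> b) = (if b = c then c \<bullet> x else 0)"
        proof (cases "b = c")
          case True then show ?thesis using nB[OF \<open>c \<in> B\<close>] by (simp add: norm_eq_1)
        next
          case False then have "c \<bullet> b = 0" using poB \<open>b \<in> B\<close> \<open>c \<in> B\<close>
            by (auto simp: pairwise_def orthogonal_def)
          then show ?thesis using False by simp
        qed
      qed simp
      also have "\<dots> = c \<bullet> x" using \<open>c \<in> B\<close> fB by (simp add: sum.delta')
      finally show ?thesis by (simp add: y_def inner_diff_right)
    qed
    then show ?thesis by (simp add: V_def orthogonal_def)
  qed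
  then obtain u where uV: "u \<in> V" and un: "norm u = 1" and ue: "A *v u = (u \<bullet> (A *v u)) *\<^sub>R u"
    using eig_exists[OF A V inv] \<open>y \<noteq> 0\<close> by blast
  have uB: "u \<notin> B"
  proof
    assume "u \<in> B"
    then have "u \<bullet> u = 0" using uV by (auto simp: V_def orthogonal_def)
    then show False using un by (simp add: norm_eq_1)
  qed
  have "oeig A (insert u B)"
    unfolding oeig_def
  proof (intro conjI)
    show "finite (insert u B)" using fB by simp
    show "pairwise orthogonal (insert u B)"
    proof (rule pairwise_orthogonal_insert[OF poB])
      fix z assume "z \<in> B" then show "orthogonal u z" using uV
        by (auto simp: V_def orthogonal_def inner_commute)
    qed
    show "\<forall>b\<in>insert u B. norm b = 1 \<and> A *v b = (b \<bullet> (A *v b)) *\<^sub>R b"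
      using un ue nB eB by auto
  qed
  moreover have "card (insert u B) = Suc (card B)" using fB uB by simp
  ultimately show ?thesis by blast
qed

lemma oeig_card:
  fixes A :: "real^'n^'n"
  assumes A: "sym_mat A" and k: "k \<le> CARD('n)"
  shows "\<exists>B. oeig A B \<and> card B = k"
  using k
proof (induction k)
  case 0
  have "oeig A {}" by (simp add: oeig_def)
  then show ?case by (intro exI[of _ "{}"]) simp
next
  case (Suc k)
  then obtain B where "oeig A B" "card B = k" by auto
  then show ?case using oeig_extend[OF A, of B] Suc.prems by auto
qed

lemma mat_col: "((A::real^'n^'n) ** (\<chi> i j. f j $ i)) $ i $ j = (A *v f j) $ i"
  unfolding matrix_matrix_mult_def matrix_vector_mult_def by simp

theorem spectral:
  fixes A :: "real^'n^'n"
  assumes A: "sym_mat A"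
  shows "\<exists>U d. orthogonal_matrix U \<and> A = MM U d"
proof -
  obtain B where B: "oeig A B" and cB: "card B = CARD('n)" using oeig_card[OF A order_refl] by blast
  have fB: "finite B" and poB: "pairwise orthogonal B"
    and nB: "\<And>b. b \<in> B \<Longrightarrow> norm b = 1"
    and eB: "\<And>b. b \<in> B \<Longrightarrow> A *v b = (b \<bullet> (A *v b)) *\<^sub>R b"
    using B by (auto simp: oeig_def)
  obtain f where f: "bij_betw f (UNIV::'n set) B"
    using finite_same_card_bij[of "UNIV::'n set" B] fB cB by auto
  have fB': "f j \<in> B" for j using f by (auto simp: bij_betw_def)
  have finj: "f i = f j \<longleftrightarrow> i = j" for i j using f by (auto simp: bij_betw_def inj_on_def)
  have fdot: "f i \<bullet> f j = (if i = j then 1 else 0)" for i j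
  proof (cases "i = j")
    case True then show ?thesis using nB[OF fB'] by (simp add: norm_eq_1)
  next
    case False then have "f i \<noteq> f j" using finj by simp
    then show ?thesis using poB fB' False by (auto simp: pairwise_def orthogonal_def)
  qed
  define U :: "real^'n^'n" where "U = (\<chi> i j. f j $ i)"
  define d where "d j = f j \<bullet> (A *v f j)" for j
  have "(transpose U ** U) $ i $ j = f i \<bullet> f j" for i j
    unfolding U_def transpose_def matrix_matrix_mult_def inner_vec_def by simp
  then have UtU: "transpose U ** U = mat 1"
    by (simp add: fdot mat_def vec_eq_iff)
  have UUt: "U ** transpose U = mat 1" by (rule matrix_left_right_inverse1[OF UtU])
  have U: "orthogonal_matrix U" using UtU UUt by (simp add: orthogonal_matrix_def)
  have e1: "(A ** U) $ i $ j = d j * f j $ i" for i j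
  proof -
    have "(A ** U) $ i $ j = (A *v f j) $ i"
      unfolding U_def by (rule mat_col)
    also have "\<dots> = (d j *\<^sub>R f j) $ i" unfolding d_def using eB[OF fB'] by (rule arg_cong)
    also have "\<dots> = d j * f j $ i" by simp
    finally show ?thesis .
  qed
  have e2: "(U ** dg d) $ i $ j = d j * f j $ i" for i j
  proof -
    have "(U ** dg d) $ i $ j = (\<Sum>k\<in>UNIV. f k $ i * (if k = j then d k else 0))"
      unfolding U_def dg_def matrix_matrix_mult_def by simp
    also have "\<dots> = (\<Sum>k\<in>UNIV. if k = j then f j $ i * d j else 0)"
      by (rule sum.cong) auto
    also have "\<dots> = d j * f j $ i" by simp
    finally show ?thesis .
  qed
  have AU: "A ** U = U ** dg d" using e1 e2 by (simp add: vec_eq_iff)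
  have "A = (A ** U) ** transpose U" by (simp add: matrix_mul_assoc[symmetric] UUt)
  also have "\<dots> = MM U d" by (simp add: AU MM_def)
  finally show ?thesis using U by blast
qed

lemma transpose_diff: "transpose ((A::real^'n^'n) - B) = transpose A - transpose B"
  by (simp add: transpose_def vec_eq_iff)

lemma pd_spec:
  fixes A :: "real^'n^'n" assumes "pd_mat A"
  shows "\<exists>U d. orthogonal_matrix U \<and> A = MM U d \<and> (\<forall>i. d i > 0)"
proof -
  obtain U d where U: "orthogonal_matrix U" and A: "A = MM U d"
    using spectral[of A] assms unfolding pd_mat_def by blast
  have "d i > 0" for i
    using assms MM_eigen[OF U, of i d] MM_eigen_nz[OF U, of i] A by (auto simp: pd_mat_def)
  then show ?thesis using U A by blast
qed

lemma psd_spec: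
  fixes A :: "real^'n^'n" assumes "psd_mat A"
  shows "\<exists>U d. orthogonal_matrix U \<and> A = MM U d \<and> (\<forall>i. d i \<ge> 0)"
proof -
  obtain U d where U: "orthogonal_matrix U" and A: "A = MM U d"
    using spectral[of A] assms unfolding psd_mat_def by blast
  have "d i \<ge> 0" for i
  proof -
    have "0 \<le> (U *v axis i 1) \<bullet> (A *v (U *v axis i 1))" using assms by (simp add: psd_mat_def)
    then show ?thesis using MM_eigen[OF U, of i d] A by simp
  qed
  then show ?thesis using U A by blast
qed

lemma psd_diag_nonneg:
  assumes U: "orthogonal_matrix U" and "psd_mat (MM U d)" shows "d i \<ge> 0"
proof -
  have "0 \<le> (U *v axis i 1) \<bullet> (MM U d *v (U *v axis i 1))" using assms by (simp add: psd_mat_def)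
  then show ?thesis using MM_eigen[OF U, of i d] by simp
qed

lemma pd_det_pos: fixes A :: "real^'n^'n" assumes "pd_mat A" shows "det A > 0"
proof -
  obtain U d where U: "orthogonal_matrix U" and A: "A = MM U d" and d: "\<forall>i. d i > 0"
    using pd_spec[OF assms] by blast
  show ?thesis using MM_det[OF U] A d by (simp add: prod_pos)
qed

lemma trace_quad:
  fixes D A :: "real^'n^'n" assumes "transpose D = D"
  shows "trace (D ** A ** D) = (\<Sum>i\<in>UNIV. (D$i) \<bullet> (A *v (D$i)))"
proof -
  have Ds: "D $ l $ i = D $ i $ l" for i l
    using assms by (metis transpose_def vec_lambda_beta)
  have "(D ** A ** D) $ i $ i = (D$i) \<bullet> (A *v (D$i))" for i
  proof -
    have "(D ** A ** D) $ i $ i = (\<Sum>l\<in>UNIV. (\<Sum>k\<in>UNIV. D$i$k * A$k$l) * D$l$i)"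
      unfolding matrix_matrix_mult_def by simp
    also have "\<dots> = (\<Sum>l\<in>UNIV. \<Sum>k\<in>UNIV. D$i$k * (A$k$l * D$i$l))"
      by (simp add: sum_distrib_right Ds mult.assoc)
    also have "\<dots> = (\<Sum>k\<in>UNIV. \<Sum>l\<in>UNIV. D$i$k * (A$k$l * D$i$l))"
      by (rule sum.swap)
    also have "\<dots> = (D$i) \<bullet> (A *v (D$i))"
      unfolding inner_vec_def matrix_vector_mult_def by (simp add: sum_distrib_left)
    finally show ?thesis .
  qed
  then show ?thesis by (simp add: trace_def)
qed

lemma trace_quad_nonneg:
  fixes D A :: "real^'n^'n" assumes "transpose D = D" "pd_mat A"
  shows "trace (D ** A ** D) \<ge> 0"
proof -
  have "0 \<le> (D$i) \<bullet> (A *v (D$i))" for i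
    using assms(2) by (cases "D$i = 0") (auto simp: pd_mat_def less_imp_le)
  then show ?thesis by (simp add: trace_quad[OF assms(1)] sum_nonneg)
qed

lemma trace_quad_zero:
  fixes D A :: "real^'n^'n" assumes "transpose D = D" "pd_mat A" "trace (D ** A ** D) = 0"
  shows "D = 0"
proof -
  have nn: "0 \<le> (D$i) \<bullet> (A *v (D$i))" for i
    using assms(2) by (cases "D$i = 0") (auto simp: pd_mat_def less_imp_le)
  have "\<forall>i\<in>UNIV. (D$i) \<bullet> (A *v (D$i)) = 0"
    using assms(3) nn by (subst sum_nonneg_eq_0_iff[symmetric]) (auto simp: trace_quad[OF assms(1)])
  then have "D$i = 0" for i using assms(2) by (auto simp: pd_mat_def)
  then show ?thesis by (simp add: vec_eq_iff)
qed

lemma sqrt_unique: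
  fixes R Q :: "real^'n^'n"
  assumes R: "pd_mat R" and Q: "pd_mat Q" and eq: "R ** R = Q ** Q"
  shows "R = Q"
proof -
  define D where "D = R - Q"
  have Rs: "transpose R = R" and Qs: "transpose Q = Q" using R Q by (auto simp: pd_mat_def sym_mat_def)
  have Ds: "transpose D = D" by (simp add: D_def transpose_diff Rs Qs)
  have "R ** D + D ** Q = 0" using eq by (simp add: D_def mlsub mrsub)
  then have "D ** (R ** D + D ** Q) = 0" by simp
  then have "trace (D ** (R ** D)) + trace (D ** (D ** Q)) = 0"
    by (metis mladd trace_add trace_0 mat_0)
  moreover have "trace (D ** (D ** Q)) = trace (D ** Q ** D)" by (metis trace_mul_sym)
  moreover have "trace (D ** (R ** D)) = trace (D ** R ** D)" by (simp add: matrix_mul_assoc)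
  moreover have "trace (D ** R ** D) \<ge> 0" by (rule trace_quad_nonneg[OF Ds R])
  moreover have "trace (D ** Q ** D) \<ge> 0" by (rule trace_quad_nonneg[OF Ds Q])
  ultimately have "trace (D ** R ** D) = 0" by linarith
  then have "D = 0" by (rule trace_quad_zero[OF Ds R])
  then show ?thesis by (simp add: D_def)
qed

lemma mat_sqrt_eq:
  assumes "pd_mat R" "R ** R = H" shows "mat_sqrt H = R"
  unfolding mat_sqrt_def
  by (rule the_equality) (use assms sqrt_unique in auto)

definition wf :: "real \<Rightarrow> real \<Rightarrow> real" where
  "wf la x = 1 / (sqrt (la + 1/4 * (x * x)) + 1/2 * x)"

lemma wf_den_pos: "la > 0 \<Longrightarrow> x \<ge> 0 \<Longrightarrow> sqrt (la + 1/4 * (x * x)) + 1/2 * x > 0"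
proof -
  assume la: "la > 0" and x: "x \<ge> 0"
  have "la + 1/4 * (x * x) > 0" using la x by (simp add: add_pos_nonneg)
  then have "sqrt (la + 1/4 * (x * x)) > 0" by simp
  moreover have "1/2 * x \<ge> 0" using x by simp
  ultimately show ?thesis by linarith
qed

lemma wf_pos: "la > 0 \<Longrightarrow> x \<ge> 0 \<Longrightarrow> wf la x > 0"
  unfolding wf_def using wf_den_pos by simp

lemma wf_eq: assumes "la > 0" "x \<ge> 0" shows "1 / wf la x = x + la * wf la x"
proof -
  define r where "r = sqrt (la + 1/4 * (x * x))"
  have d: "r + 1/2 * x > 0" using wf_den_pos[OF assms] by (simp add: r_def)
  have rr: "r * r = la + 1/4 * (x * x)"
    unfolding r_def using assms by (simp add: real_sqrt_mult_self)
  have "(r - 1/2 * x) * (r + 1/2 * x) = la" using rr by (simp add: algebra_simps)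
  then have "r + 1/2 * x = x + la / (r + 1/2 * x)" using d by (simp add: field_simps)
  then show ?thesis unfolding wf_def r_def[symmetric] by simp
qed

lemma wf_unique: assumes "q > 0" "la > 0" "x = 1 / q - la * q" "x \<ge> 0" shows "wf la x = q"
proof -
  have s: "x / 2 + la * q \<ge> 0" using assms by simp
  have "(x / 2 + la * q)^2 = la + 1/4 * (x * x)"
  proof -
    have "x * q + la * q * q = 1" using assms by (simp add: field_simps)
    then have "la * (x * q) + la * (la * q * q) = la" by (metis distrib_left mult.assoc mult_1_right)
    then show ?thesis by (simp add: power2_eq_square algebra_simps)
  qed
  then have "sqrt (la + 1/4 * (x * x)) = x / 2 + la * q" using s by (metis real_sqrt_abs abs_of_nonneg)
  then have "sqrt (la + 1/4 * (x * x)) + 1/2 * x = 1 / q" using assms by simp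
  then show ?thesis unfolding wf_def by simp
qed

lemma wf_le: assumes "la > 0" "x \<ge> 0" shows "wf la x \<le> 1 / sqrt la"
proof -
  have "sqrt la \<le> sqrt (la + 1/4 * (x * x))" by (simp add: real_sqrt_le_iff)
  then have "sqrt la \<le> sqrt (la + 1/4 * (x * x)) + 1/2 * x" using assms by linarith
  moreover have "0 < (sqrt (la + 1/4 * (x * x)) + 1/2 * x) * sqrt la"
    using wf_den_pos[OF assms] assms by simp
  ultimately show ?thesis unfolding wf_def by (intro divide_left_mono) auto
qed

lemma Oh_gen:
  assumes V: "orthogonal_matrix V" and S: "S = MM V \<sigma>" and \<sigma>: "\<And>i. \<sigma> i \<ge> 0" and la: "la > 0"
  shows "Omega_hat S la = MM V (\<lambda>i. wf la (\<sigma> i))"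
proof -
  define r where "r i = sqrt (la + 1/4 * (\<sigma> i * \<sigma> i))" for i
  have H: "la *\<^sub>R mat 1 + (1/4) *\<^sub>R (S ** S) = MM V (\<lambda>i. la + 1/4 * (\<sigma> i * \<sigma> i))"
    by (simp add: S MM_const[OF V, symmetric] MM_mult[OF V] MM_scale[OF V] MM_add[OF V])
  have rr: "(\<lambda>i. r i * r i) = (\<lambda>i. la + 1/4 * (\<sigma> i * \<sigma> i))"
    using la by (auto simp: r_def real_sqrt_mult_self intro!: ext)
  have rpos: "r i > 0" for i using la by (simp add: r_def add_pos_nonneg)
  have "mat_sqrt (la *\<^sub>R mat 1 + (1/4) *\<^sub>R (S ** S)) = MM V r"
    by (rule mat_sqrt_eq) (use rpos in \<open>simp_all add: MM_pd[OF V] MM_mult[OF V] rr H\<close>)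
  then have "mat_sqrt (la *\<^sub>R mat 1 + (1/4) *\<^sub>R (S ** S)) + (1/2) *\<^sub>R S = MM V (\<lambda>i. r i + 1/2 * \<sigma> i)"
    by (simp add: S MM_scale[OF V] MM_add[OF V])
  moreover have "r i + 1/2 * \<sigma> i > 0" for i unfolding r_def by (rule wf_den_pos[OF la \<sigma>])
  then have "r i + 1/2 * \<sigma> i \<noteq> 0" for i by (metis less_irrefl)
  ultimately show ?thesis
    unfolding Omega_hat_def by (simp add: MM_inv[OF V] wf_def r_def)
qed

lemma trace_tt_nonneg: "trace (transpose (D::real^'n^'n) ** D) \<ge> 0"
  by (simp add: trace_def matrix_matrix_mult_def transpose_def sum_nonneg)

lemma sq1: "x > 0 \<Longrightarrow> 1 / sqrt x * (1 / sqrt x) = 1 / (x::real)"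
proof -
  assume x: "x > 0"
  have "1 / sqrt x * (1 / sqrt x) = 1 / (sqrt x * sqrt x)" by simp
  also have "sqrt x * sqrt x = x" using x by simp
  finally show ?thesis .
qed
lemma sq2: "x > 0 \<Longrightarrow> 1 / sqrt x * (1 / sqrt x) * x = (1::real)"
  using sq1[of x] by simp
lemma sq3: "x > 0 \<Longrightarrow> sqrt x * (1 / sqrt x) = (1::real)"
  by simp

lemma obj_max:
  fixes S Oh \<Omega> :: "real^'n^'n"
  assumes la: "la > 0" and Ohpd: "pd_mat Oh" and inv: "matrix_inv Oh = S + la *\<^sub>R Oh"
    and Opd: "pd_mat \<Omega>"
  shows "objective S la \<Omega> \<le> objective S la Oh"
proof -
  obtain U w where U: "orthogonal_matrix U" and Oh: "Oh = MM U w" and w: "\<And>i. w i > 0"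
    using pd_spec[OF Ohpd] by blast
  define K where "K = MM U (\<lambda>i. 1 / sqrt (w i))"
  define Ki where "Ki = MM U (\<lambda>i. sqrt (w i))"
  have winv: "matrix_inv Oh = MM U (\<lambda>i. 1 / w i)"
    unfolding Oh by (rule MM_inv[OF U]) (use w in \<open>simp add: less_imp_neq[symmetric]\<close>)
  have "(\<lambda>i. 1 / sqrt (w i) * (1 / sqrt (w i))) = (\<lambda>i. 1 / w i)"
    by (intro ext sq1 w)
  then have KK: "K ** K = S + la *\<^sub>R Oh"
    by (simp add: K_def MM_mult[OF U] winv[symmetric] inv)
  have "(\<lambda>i. sqrt (w i) * (1 / sqrt (w i))) = (\<lambda>i. 1)"
    by (intro ext sq3 w)
  then have KiK: "Ki ** K = mat 1"
    by (simp add: K_def Ki_def MM_mult[OF U] MM_const[OF U])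
  have Ks: "transpose K = K" by (simp add: K_def MM_sym[OF U])
  have Os: "transpose \<Omega> = \<Omega>" using Opd by (simp add: pd_mat_def sym_mat_def)
  have Ohs: "transpose Oh = Oh" using Ohpd by (simp add: pd_mat_def sym_mat_def)
  define X where "X = K ** \<Omega> ** K"
  have Xpd: "pd_mat X"
    unfolding pd_mat_def sym_mat_def
  proof (intro conjI allI impI)
    show "transpose X = X"
      by (simp add: X_def matrix_transpose_mul Ks Os matrix_mul_assoc)
    fix x :: "real^'n" assume "x \<noteq> 0"
    define y where "y = K *v x"
    have "Ki *v y = x" by (simp add: y_def matrix_vector_mul_assoc KiK)
    then have "y \<noteq> 0" using \<open>x \<noteq> 0\<close> by auto
    then have "0 < y \<bullet> (\<Omega> *v y)" using Opd by (simp add: pd_mat_def)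
    also have "y \<bullet> (\<Omega> *v y) = x \<bullet> (K *v (\<Omega> *v y))"
      using sym_inner[of K x "\<Omega> *v y"] Ks by (simp add: sym_mat_def y_def)
    also have "\<dots> = x \<bullet> (X *v x)"
      by (simp add: X_def y_def matrix_vector_mul_assoc matrix_mul_assoc)
    finally show "0 < x \<bullet> (X *v x)" .
  qed
  have dOh: "det Oh > 0" by (rule pd_det_pos[OF Ohpd])
  have dO: "det \<Omega> > 0" by (rule pd_det_pos[OF Opd])
  have detX: "det X * det Oh = det \<Omega>"
  proof -
    have "(\<lambda>i. 1 / sqrt (w i) * (1 / sqrt (w i)) * w i) = (\<lambda>i. 1)"
      by (intro ext sq2 w)
    then have "K ** K ** Oh = mat 1"
      by (simp add: K_def Oh MM_mult[OF U] MM_const[OF U])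
    then have "det K * det K * det Oh = 1" by (metis det_mul det_I)
    then show ?thesis by (simp add: X_def det_mul algebra_simps)
  qed
  have trX: "trace X = trace (S ** \<Omega>) + la * trace (Oh ** \<Omega>)"
  proof -
    have "trace X = trace (K ** (K ** \<Omega>))" unfolding X_def by (rule trace_mul_sym)
    also have "\<dots> = trace ((S + la *\<^sub>R Oh) ** \<Omega>)" by (simp add: matrix_mul_assoc KK)
    also have "\<dots> = trace (S ** \<Omega>) + la * trace (Oh ** \<Omega>)"
      by (simp add: mradd mscr trace_add trace_scale)
    finally show ?thesis .
  qed
  have lnX: "ln (det X) \<le> trace X - real CARD('n)"
  proof -
    obtain V \<mu> where V: "orthogonal_matrix V" and X: "X = MM V \<mu>" and \<mu>: "\<And>i. \<mu> i > 0"
      using pd_spec[OF Xpd] by blast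
    have "ln (det X) = (\<Sum>i\<in>UNIV. ln (\<mu> i))"
      unfolding X MM_det[OF V] by (rule ln_prod) (use \<mu> in \<open>auto simp: less_imp_neq[symmetric]\<close>)
    also have "\<dots> \<le> (\<Sum>i\<in>UNIV. \<mu> i - 1)" by (rule sum_mono) (rule ln_le_minus_one[OF \<mu>])
    also have "\<dots> = trace X - real CARD('n)"
      by (simp add: X MM_trace[OF V] sum_subtractf)
    finally show ?thesis .
  qed
  have lnd: "ln (det \<Omega>) - ln (det Oh) = ln (det X)"
  proof -
    have "det X = det \<Omega> / det Oh" using detX dOh by (simp add: field_simps)
    then show ?thesis using dO dOh by (simp add: ln_div)
  qed
  have quad: "trace (\<Omega> ** \<Omega>) - 2 * trace (Oh ** \<Omega>) + trace (Oh ** Oh) \<ge> 0"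
  proof -
    define D where "D = \<Omega> - Oh"
    have Ds: "transpose D = D" by (simp add: D_def transpose_diff Os Ohs)
    have "trace (transpose D ** D) \<ge> 0" by (rule trace_tt_nonneg)
    also have "trace (transpose D ** D) = trace (\<Omega> ** \<Omega>) - trace (\<Omega> ** Oh) - trace (Oh ** \<Omega>) + trace (Oh ** Oh)"
      by (simp only: Ds) (simp add: D_def mlsub mrsub trace_sub)
    also have "trace (\<Omega> ** Oh) = trace (Oh ** \<Omega>)" by (rule trace_mul_sym)
    finally show ?thesis by simp
  qed
  have fx: "trace (S ** Oh) + la * trace (Oh ** Oh) = real CARD('n)"
  proof -
    have e: "S + la *\<^sub>R Oh = MM U (\<lambda>i. 1 / w i)" using inv winv by simp
    have "(\<lambda>i. 1 / w i * w i) = (\<lambda>i. 1)" using w by (intro ext) (simp add: less_imp_neq[symmetric])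
    then have "(S + la *\<^sub>R Oh) ** Oh = mat 1"
      unfolding e by (simp add: Oh MM_mult[OF U] MM_const[OF U])
    then have "trace ((S + la *\<^sub>R Oh) ** Oh) = real CARD('n)" by (simp add: trace_I)
    then show ?thesis by (simp add: mradd mscr trace_add trace_scale)
  qed
  have q2: "la * (trace (\<Omega> ** \<Omega>) - 2 * trace (Oh ** \<Omega>) + trace (Oh ** Oh)) \<ge> 0"
    using la quad by simp
  show ?thesis
    unfolding objective_def Os Ohs
    using lnX lnd trX fx q2 by (simp add: algebra_simps)
qed

lemma pd_diag_pos:
  assumes U: "orthogonal_matrix U" and "pd_mat (MM U d)" shows "d i > 0"
proof -
  have "0 < (U *v axis i 1) \<bullet> (MM U d *v (U *v axis i 1))"
    using assms MM_eigen_nz[OF U, of i] by (simp add: pd_mat_def)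
  then show ?thesis using MM_eigen[OF U, of i d] by simp
qed

lemma uniq:
  fixes S \<Omega> :: "real^'n^'n"
  assumes la: "la > 0" and S: "psd_mat S" and Opd: "pd_mat \<Omega>"
    and eq: "matrix_inv \<Omega> - S - la *\<^sub>R \<Omega> = 0"
  shows "\<Omega> = Omega_hat S la"
proof -
  obtain V q where V: "orthogonal_matrix V" and O: "\<Omega> = MM V q" and q: "\<And>i. q i > 0"
    using pd_spec[OF Opd] by blast
  have "matrix_inv \<Omega> = MM V (\<lambda>i. 1 / q i)"
    unfolding O by (rule MM_inv[OF V]) (use q in \<open>simp add: less_imp_neq[symmetric]\<close>)
  moreover have "S = matrix_inv \<Omega> - la *\<^sub>R \<Omega>" using eq by (simp add: algebra_simps)
  ultimately have S': "S = MM V (\<lambda>i. 1 / q i - la * q i)"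
    by (simp add: O MM_scale[OF V] MM_sub[OF V])
  have sg: "1 / q i - la * q i \<ge> 0" for i
    using psd_diag_nonneg[OF V, of "\<lambda>i. 1 / q i - la * q i" i] S S' by simp
  have "Omega_hat S la = MM V (\<lambda>i. wf la (1 / q i - la * q i))"
    by (rule Oh_gen[OF V S' sg la])
  also have "(\<lambda>i. wf la (1 / q i - la * q i)) = q"
    by (intro ext wf_unique q la refl sg)
  finally show ?thesis using O by simp
qed

theorem corollary1:
  fixes S :: "real^'p^'p"
  assumes "psd_mat S"
  shows "(\<forall>la>0.
            pd_mat (Omega_hat S la)
          \<and> (\<forall>\<Omega>. pd_mat \<Omega> \<longrightarrow> objective S la \<Omega> \<le> objective S la (Omega_hat S la))
          \<and> matrix_inv (Omega_hat S la) - S - la *\<^sub>R Omega_hat S la = 0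
          \<and> (\<forall>\<Omega>. pd_mat \<Omega> \<and> matrix_inv \<Omega> - S - la *\<^sub>R \<Omega> = 0 \<longrightarrow> \<Omega> = Omega_hat S la))
       \<and> (pd_mat S \<longrightarrow> ((\<lambda>la. Omega_hat S la) \<longlongrightarrow> matrix_inv S) (at_right 0))
       \<and> ((\<lambda>la. Omega_hat S la) \<longlongrightarrow> 0) at_top"
proof -
  obtain U s where U: "orthogonal_matrix U" and S: "S = MM U s" and s: "\<And>i. s i \<ge> 0"
    using psd_spec[OF assms] by blast
  have Oh: "Omega_hat S la = MM U (\<lambda>i. wf la (s i))" if "la > 0" for la
    by (rule Oh_gen[OF U S s that])
  have P1: "pd_mat (Omega_hat S la)
          \<and> (\<forall>\<Omega>. pd_mat \<Omega> \<longrightarrow> objective S la \<Omega> \<le> objective S la (Omega_hat S la))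
          \<and> matrix_inv (Omega_hat S la) - S - la *\<^sub>R Omega_hat S la = 0
          \<and> (\<forall>\<Omega>. pd_mat \<Omega> \<and> matrix_inv \<Omega> - S - la *\<^sub>R \<Omega> = 0 \<longrightarrow> \<Omega> = Omega_hat S la)"
    if la: "la > 0" for la
  proof -
    have wpos: "wf la (s i) > 0" for i by (rule wf_pos[OF la s])
    have pd: "pd_mat (Omega_hat S la)" unfolding Oh[OF la] by (rule MM_pd[OF U wpos])
    have "matrix_inv (Omega_hat S la) = MM U (\<lambda>i. 1 / wf la (s i))"
      unfolding Oh[OF la] by (rule MM_inv[OF U]) (use wpos in \<open>simp add: less_imp_neq[symmetric]\<close>)
    also have "(\<lambda>i. 1 / wf la (s i)) = (\<lambda>i. s i + la * wf la (s i))"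
      by (intro ext wf_eq la s)
    also have "MM U \<dots> = S + la *\<^sub>R Omega_hat S la"
      unfolding Oh[OF la] by (simp add: S MM_scale[OF U] MM_add[OF U])
    finally have inv: "matrix_inv (Omega_hat S la) = S + la *\<^sub>R Omega_hat S la" .
    show ?thesis
    proof (intro conjI allI impI)
      show "pd_mat (Omega_hat S la)" by (rule pd)
      show "objective S la \<Omega> \<le> objective S la (Omega_hat S la)" if "pd_mat \<Omega>" for \<Omega>
        by (rule obj_max[OF la pd inv that])
      show "matrix_inv (Omega_hat S la) - S - la *\<^sub>R Omega_hat S la = 0" using inv by simp
      show "\<Omega> = Omega_hat S la" if "pd_mat \<Omega> \<and> matrix_inv \<Omega> - S - la *\<^sub>R \<Omega> = 0" for \<Omega>
        using uniq[OF la assms] that by blast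
    qed
  qed
  have ev0: "\<forall>\<^sub>F la in at_right (0::real). Omega_hat S la = MM U (\<lambda>i. wf la (s i))"
    using eventually_at_right_less[of "0::real"] by eventually_elim (rule Oh)
  have evT: "\<forall>\<^sub>F la in at_top. Omega_hat S la = MM U (\<lambda>i. wf la (s i))"
    using eventually_gt_at_top[of "0::real"] by eventually_elim (rule Oh)
  have P2: "((\<lambda>la. Omega_hat S la) \<longlongrightarrow> matrix_inv S) (at_right 0)" if Spd: "pd_mat S"
  proof -
    have sp: "s i > 0" for i using pd_diag_pos[OF U, of s i] Spd S by simp
    have Si: "matrix_inv S = MM U (\<lambda>i. 1 / s i)"
      unfolding S by (rule MM_inv[OF U]) (use sp in \<open>simp add: less_imp_neq[symmetric]\<close>)
    have lim: "((\<lambda>la. wf la (s i)) \<longlongrightarrow> 1 / s i) (at_right 0)" for i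
    proof -
      have den: "sqrt (0 + 1/4 * (s i * s i)) + 1/2 * s i = s i"
      proof -
        have "0 + 1/4 * (s i * s i) = (s i / 2)^2" by (simp add: power2_eq_square)
        then have "sqrt (0 + 1/4 * (s i * s i)) = s i / 2" using s[of i] by simp
        then show ?thesis by simp
      qed
      have "((\<lambda>la. 1 / (sqrt (la + 1/4 * (s i * s i)) + 1/2 * s i)) \<longlongrightarrow>
               1 / (sqrt (0 + 1/4 * (s i * s i)) + 1/2 * s i)) (at_right 0)"
        by (intro tendsto_intros) (use den sp[of i] in auto)
      then show ?thesis unfolding wf_def den .
    qed
    have "((\<lambda>la. MM U (\<lambda>i. wf la (s i))) \<longlongrightarrow> MM U (\<lambda>i. 1 / s i)) (at_right 0)"
      by (rule MM_tendsto[OF U lim])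
    then show ?thesis unfolding Si using tendsto_cong[OF ev0] by blast
  qed
  have P3: "((\<lambda>la. Omega_hat S la) \<longlongrightarrow> 0) at_top"
  proof -
    have lim: "((\<lambda>la. wf la (s i)) \<longlongrightarrow> 0) at_top" for i
    proof (rule real_tendsto_sandwich[where f = "\<lambda>_. 0" and h = "\<lambda>la. 1 / sqrt la"])
      show "\<forall>\<^sub>F la in at_top. 0 \<le> wf la (s i)"
        using eventually_gt_at_top[of "0::real"] by eventually_elim (use wf_pos s in \<open>auto intro: less_imp_le\<close>)
      show "\<forall>\<^sub>F la in at_top. wf la (s i) \<le> 1 / sqrt la"
        using eventually_gt_at_top[of "0::real"] by eventually_elim (use wf_le s in auto)
      show "((\<lambda>_. 0::real) \<longlongrightarrow> 0) at_top" by simp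
      show "((\<lambda>la::real. 1 / sqrt la) \<longlongrightarrow> 0) at_top" by real_asymp
    qed
    have "((\<lambda>la. MM U (\<lambda>i. wf la (s i))) \<longlongrightarrow> MM U (\<lambda>i. 0)) at_top"
      by (rule MM_tendsto[OF U lim])
    then show ?thesis unfolding MM_zero[OF U] using tendsto_cong[OF evT] by blast
  qed
  show ?thesis using P1 P2 P3 by blast
qed

end
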